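(* Let $X$ be a compact topological space equipped with a continuous action of an infinite strongly sofic monoid $M$, and let $\Sigma=(D_i,\sigma_i)_{i\in I}$ be a strong sofic approximation of $M$. If $\rho$ and $\rho'$ are dynamically generating continuous pseudometrics for $(X,M)$, then $h_\Sigma(X,M,\rho)=h_\Sigma(X,M,\rho')$.
   Context: Hamming metric on $\operatorname{Map}(D)$ (maps $D\to D$, $D$ finite non-empty): $d_D^{\mathrm{Ham}}(f,g)=\frac{1}{|D|}|\{v:f(v)\ne g(v)\}|$. A strong sofic approximation of $M$ is a net $(D_i,\sigma_i)_{i\in I}$ over a directed set, $D_i$ non-empty finite, $\sigma_i\colon M\to\operatorname{Map}(D_i)$, with $\sigma_i(1_M)=\mathrm{Id}_{D_i}$; $\lim_i d^{\mathrm{Ham}}_{D_i}(\sigma_i(m_1m_2),\sigma_i(m_1)\sigma_i(m_2))=0$ for all $m_1,m_2$; $\lim_i d^{\mathrm{Ham}}_{D_i}(\sigma_i(m_1),\sigma_i(m_2))=1$ for distinct $m_1,m_2$; and for every finite $K\subset M$ an integer $\Delta_K\ge1$ with $|\sigma_i(k)^{-1}(v)|\le\Delta_K$ for all $i$, $k\in K$, $v\in D_i$. A monoid is strongly sofic iff it has one. A pseudometric $\rho$ is dynamically generating if for distinct $x,y\in X$ some $m\in M$ has $\rho(mx,my)>0$. For non-empty finite $D$, on $X^D$: $\rho_2^D(\varphi,\psi)=(\frac{1}{|D|}\sum_v\rho(\varphi(v),\psi(v))^2)^{1/2}$, $\rho_\infty^D(\varphi,\psi)=\max_v\rho(\varphi(v),\psi(v))$,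 $(m\varphi)(v)=m\varphi(v)$. For finite $F\subset M$, $\delta>0$, $\sigma\colon M\to\operatorname{Map}(D)$: $\operatorname{Map}(X,M,\rho,F,\delta,\sigma)=\{\varphi\in X^D:\rho_2^D(\varphi\circ\sigma(m),m\varphi)\le\delta\ \forall m\in F\}$. $N_\varepsilon(Z,d)$ is the maximal cardinality of a subset of $Z$ with pairwise $d$-distances $\ge\varepsilon$. $h_\Sigma(X,M,\rho)=\sup_{\varepsilon>0}\inf_F\inf_{\delta>0}\limsup_i\frac{1}{|D_i|}\log N_\varepsilon(\operatorname{Map}(X,M,\rho,F,\delta,\sigma_i),\rho_\infty^{D_i})$, infimum over finite $F\subset M$, $\log 0=-\infty$. *)

theory Defs
  imports "HOL-Analysis.Analysis"
begin

definition directed_set :: "('i \<Rightarrow> 'i \<Rightarrow> bool) \<Rightarrow> bool" where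
  "directed_set le \<longleftrightarrow> (\<forall>i. le i i) \<and> (\<forall>i j k. le i j \<longrightarrow> le j k \<longrightarrow> le i k)
     \<and> (\<forall>i j. \<exists>k. le i k \<and> le j k)"

definition net_filter :: "('i \<Rightarrow> 'i \<Rightarrow> bool) \<Rightarrow> 'i filter" where
  "net_filter le = (INF i0. principal {i. le i0 i})"

definition continuous_monoid_action :: "('m::monoid_mult \<Rightarrow> 'x::topological_space \<Rightarrow> 'x) \<Rightarrow> bool" where
  "continuous_monoid_action act \<longleftrightarrow>
     (\<forall>x. act 1 x = x) \<and> (\<forall>m1 m2 x. act (m1 * m2) x = act m1 (act m2 x))
     \<and> (\<forall>m. continuous_on UNIV (act m))"

definition ham_dist :: "'d set \<Rightarrow> ('d \<Rightarrow> 'd) \<Rightarrow> ('d \<Rightarrow> 'd) \<Rightarrow> real" where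
  "ham_dist D f g = real (card {v\<in>D. f v \<noteq> g v}) / real (card D)"

text \<open>A net (D i, \<sigma> i) over the directed set (UNIV, le); each \<sigma> i m is a map
  D i \<rightarrow> D i (its values outside D i are irrelevant).\<close>
definition strong_sofic_approx ::
  "('i \<Rightarrow> 'i \<Rightarrow> bool) \<Rightarrow> ('i \<Rightarrow> 'd set) \<Rightarrow> ('i \<Rightarrow> 'm::monoid_mult \<Rightarrow> 'd \<Rightarrow> 'd) \<Rightarrow> bool" where
  "strong_sofic_approx le D \<sigma> \<longleftrightarrow>
     directed_set le
     \<and> (\<forall>i. finite (D i) \<and> D i \<noteq> {})
     \<and> (\<forall>i m. \<sigma> i m ` D i \<subseteq> D i)
     \<and> (\<forall>i. \<forall>v\<in>D i. \<sigma> i 1 v = v)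
     \<and> (\<forall>m1 m2. ((\<lambda>i. ham_dist (D i) (\<sigma> i (m1 * m2)) (\<sigma> i m1 \<circ> \<sigma> i m2)) \<longlongrightarrow> 0) (net_filter le))
     \<and> (\<forall>m1 m2. m1 \<noteq> m2 \<longrightarrow> ((\<lambda>i. ham_dist (D i) (\<sigma> i m1) (\<sigma> i m2)) \<longlongrightarrow> 1) (net_filter le))
     \<and> (\<forall>K. finite K \<longrightarrow> (\<exists>\<Delta>::nat. \<Delta> \<ge> 1 \<and>
           (\<forall>i. \<forall>k\<in>K. \<forall>v\<in>D i. card {w\<in>D i. \<sigma> i k w = v} \<le> \<Delta>)))"

definition strongly_sofic :: "'m::monoid_mult itself \<Rightarrow> bool" where
  "strongly_sofic (_::'m itself) \<longleftrightarrow>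
     (\<exists>(le::'m set \<times> nat \<Rightarrow> 'm set \<times> nat \<Rightarrow> bool) (D::'m set \<times> nat \<Rightarrow> nat set)
          (\<sigma>::'m set \<times> nat \<Rightarrow> 'm \<Rightarrow> nat \<Rightarrow> nat).
        strong_sofic_approx le D \<sigma>)"

definition pseudometric :: "('x \<Rightarrow> 'x \<Rightarrow> real) \<Rightarrow> bool" where
  "pseudometric \<rho> \<longleftrightarrow> (\<forall>x y. 0 \<le> \<rho> x y) \<and> (\<forall>x. \<rho> x x = 0) \<and> (\<forall>x y. \<rho> x y = \<rho> y x)
     \<and> (\<forall>x y z. \<rho> x z \<le> \<rho> x y + \<rho> y z)"

definition continuous_pseudometric :: "('x::topological_space \<Rightarrow> 'x \<Rightarrow> real) \<Rightarrow> bool" where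
  "continuous_pseudometric \<rho> \<longleftrightarrow> pseudometric \<rho> \<and> continuous_on UNIV (\<lambda>(x, y). \<rho> x y)"

definition dynamically_generating :: "('m \<Rightarrow> 'x \<Rightarrow> 'x) \<Rightarrow> ('x \<Rightarrow> 'x \<Rightarrow> real) \<Rightarrow> bool" where
  "dynamically_generating act \<rho> \<longleftrightarrow> (\<forall>x y. x \<noteq> y \<longrightarrow> (\<exists>m. \<rho> (act m x) (act m y) > 0))"

definition rho2 :: "'d set \<Rightarrow> ('x \<Rightarrow> 'x \<Rightarrow> real) \<Rightarrow> ('d \<Rightarrow> 'x) \<Rightarrow> ('d \<Rightarrow> 'x) \<Rightarrow> real" where
  "rho2 D \<rho> \<phi> \<psi> = sqrt ((\<Sum>v\<in>D. (\<rho> (\<phi> v) (\<psi> v))^2) / real (card D))"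

definition rho_inf :: "'d set \<Rightarrow> ('x \<Rightarrow> 'x \<Rightarrow> real) \<Rightarrow> ('d \<Rightarrow> 'x) \<Rightarrow> ('d \<Rightarrow> 'x) \<Rightarrow> real" where
  "rho_inf D \<rho> \<phi> \<psi> = Max ((\<lambda>v. \<rho> (\<phi> v) (\<psi> v)) ` D)"

text \<open>X^D is represented by the extensional functions on D (PiE D UNIV).\<close>
definition Map_set ::
  "('m \<Rightarrow> 'x \<Rightarrow> 'x) \<Rightarrow> ('x \<Rightarrow> 'x \<Rightarrow> real) \<Rightarrow> 'm set \<Rightarrow> real \<Rightarrow> 'd set \<Rightarrow> ('m \<Rightarrow> 'd \<Rightarrow> 'd)
     \<Rightarrow> ('d \<Rightarrow> 'x) set" where
  "Map_set act \<rho> F \<delta> D \<sigma> =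
     {\<phi> \<in> D \<rightarrow>\<^sub>E (UNIV::'x set). \<forall>m\<in>F. rho2 D \<rho> (\<phi> \<circ> \<sigma> m) (\<lambda>v. act m (\<phi> v)) \<le> \<delta>}"

definition sep_number :: "real \<Rightarrow> 'a set \<Rightarrow> ('a \<Rightarrow> 'a \<Rightarrow> real) \<Rightarrow> ereal" where
  "sep_number \<epsilon> Z d = (SUP S\<in>{S. S \<subseteq> Z \<and> finite S \<and> (\<forall>a\<in>S. \<forall>b\<in>S. a \<noteq> b \<longrightarrow> d a b \<ge> \<epsilon>)}.
       ereal (real (card S)))"

definition elog :: "ereal \<Rightarrow> ereal" where
  "elog x = (if x = 0 then -\<infinity> else if x = \<infinity> then \<infinity> else ereal (ln (real_of_ereal x)))"

definition sofic_entropy ::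
  "('i \<Rightarrow> 'i \<Rightarrow> bool) \<Rightarrow> ('i \<Rightarrow> 'd set) \<Rightarrow> ('i \<Rightarrow> 'm \<Rightarrow> 'd \<Rightarrow> 'd)
     \<Rightarrow> ('m \<Rightarrow> 'x \<Rightarrow> 'x) \<Rightarrow> ('x \<Rightarrow> 'x \<Rightarrow> real) \<Rightarrow> ereal" where
  "sofic_entropy le D \<sigma> act \<rho> =
     (SUP \<epsilon>\<in>{0<..}. INF F\<in>{F. finite F}. INF \<delta>\<in>{0<..}.
        Limsup (net_filter le) (\<lambda>i. ereal (1 / real (card (D i))) *
           elog (sep_number \<epsilon> (Map_set act \<rho> F \<delta> (D i) (\<sigma> i)) (rho_inf (D i) \<rho>))))"

end

theory Submission
  imports Defs
begin


lemma net_eventually: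
  assumes "directed_set le"
  shows "eventually P (net_filter le) \<longleftrightarrow> (\<exists>i0. \<forall>i. le i0 i \<longrightarrow> P i)"
proof -
  have d: "(\<forall>i. le i i) \<and> (\<forall>i j k. le i j \<longrightarrow> le j k \<longrightarrow> le i k) \<and> (\<forall>i j. \<exists>k. le i k \<and> le j k)"
    using assms unfolding directed_set_def .
  have tr: "le i j \<Longrightarrow> le j k \<Longrightarrow> le i k" for i j k
    using d[THEN conjunct2, THEN conjunct1, THEN spec, THEN spec, THEN spec, of i j k] by (rule mp[THEN mp])
  have "eventually P (INF i0. principal {i. le i0 i}) \<longleftrightarrow> (\<exists>b\<in>UNIV. eventually P (principal {i. le b i}))"
  proof (rule eventually_INF_base)
    show "(UNIV::'a set) \<noteq> {}" by blast
  next
    fix a b assume "a \<in> (UNIV::'a set)" "b \<in> (UNIV::'a set)"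
    obtain k where k: "le a k" "le b k" using d[THEN conjunct2, THEN conjunct2, THEN spec, THEN spec, of a b] by (elim exE conjE)
    have "{i. le k i} \<subseteq> {i. le a i} \<inter> {i. le b i}"
    proof
      fix i assume "i \<in> {i. le k i}"
      then show "i \<in> {i. le a i} \<inter> {i. le b i}" using tr[OF k(1)] tr[OF k(2)] by simp
    qed
    then have "principal {i. le k i} \<le> inf (principal {i. le a i}) (principal {i. le b i})"
      by (simp add: inf_principal)
    then show "\<exists>x\<in>UNIV. principal {i. le x i} \<le> inf (principal {i. le a i}) (principal {i. le b i})" by blast
  qed
  then show ?thesis unfolding net_filter_def by (simp add: eventually_principal)
qed

lemma net_ne_bot:
  assumes "directed_set le"
  shows "net_filter le \<noteq> bot"
proof
  assume "net_filter le = bot"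
  then have "eventually (\<lambda>_. False) (net_filter le)" by simp
  then have "\<exists>i0. \<forall>i. le i0 i \<longrightarrow> False" by (simp only: net_eventually[OF assms])
  then obtain i0 where "\<forall>i. le i0 i \<longrightarrow> False" by (elim exE)
  moreover have "le i0 i0" using assms unfolding directed_set_def by (elim conjE) (erule spec)
  ultimately show False by simp
qed
lemma cont_pm_comp:
  assumes "continuous_on UNIV (\<lambda>(x, y). \<rho> x y)"
    and "continuous_on UNIV f" and "continuous_on UNIV g"
  shows "continuous_on UNIV (\<lambda>p. \<rho> (f p) (g p))"
proof -
  have "continuous_on UNIV (\<lambda>p. (\<lambda>(x, y). \<rho> x y) (f p, g p))"
    by (rule continuous_on_compose2[OF assms(1)]) (auto intro: continuous_on_Pair assms)
  then show ?thesis by simp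
qed

lemma pm_bounded:
  assumes "compact (UNIV :: 'x::topological_space set)" "continuous_pseudometric (\<rho> :: 'x \<Rightarrow> 'x \<Rightarrow> real)"
  shows "\<exists>R>0. \<forall>x y. \<rho> x y \<le> R"
proof -
  have c: "continuous_on UNIV (\<lambda>(x, y). \<rho> x y)" using assms(2) unfolding continuous_pseudometric_def by auto
  have "compact ((UNIV::'x set) \<times> (UNIV::'x set))" by (rule compact_Times[OF assms(1) assms(1)])
  then have "compact ((\<lambda>(x, y). \<rho> x y) ` UNIV)" using compact_continuous_image[OF c] by simp
  then have "bounded ((\<lambda>(x, y). \<rho> x y) ` UNIV)" by (rule compact_imp_bounded)
  then obtain a where a: "\<forall>z\<in>(\<lambda>(x, y). \<rho> x y) ` UNIV. norm z \<le> a" unfolding bounded_iff by blast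
  show ?thesis
  proof (intro exI[of _ "\<bar>a\<bar> + 1"] conjI allI)
    fix x y
    have "norm (\<rho> x y) \<le> a" using a by force
    then show "\<rho> x y \<le> \<bar>a\<bar> + 1" by simp
  qed simp
qed

lemma pm_cells:
  assumes "compact (UNIV :: 'x::topological_space set)" "continuous_pseudometric (\<rho> :: 'x \<Rightarrow> 'x \<Rightarrow> real)"
    and "e > 0"
  shows "\<exists>C. finite C \<and> (\<forall>x. \<exists>c\<in>C. \<rho> c x < e)"
proof -
  have c: "continuous_on UNIV (\<lambda>(x, y). \<rho> x y)" using assms(2) unfolding continuous_pseudometric_def by auto
  have pm: "pseudometric \<rho>" using assms(2) unfolding continuous_pseudometric_def by auto
  have op: "open {y. \<rho> c y < e}" for c
    by (rule open_Collect_less[OF cont_pm_comp[OF c] continuous_on_const])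
      (auto intro: continuous_on_const continuous_on_id)
  have cov: "UNIV \<subseteq> (\<Union>c\<in>UNIV. {y. \<rho> c y < e})"
    using pm assms(3) unfolding pseudometric_def by auto
  obtain C where "C \<subseteq> UNIV" "finite C" "UNIV \<subseteq> (\<Union>c\<in>C. {y. \<rho> c y < e})"
    by (rule compactE_image[OF assms(1) op cov])
  then show ?thesis by blast
qed

lemma control:
  fixes act :: "'m::monoid_mult \<Rightarrow> 'x::topological_space \<Rightarrow> 'x"
  assumes "compact (UNIV :: 'x set)" "continuous_monoid_action act"
    and "continuous_pseudometric \<rho>" "dynamically_generating act \<rho>"
    and "continuous_pseudometric \<rho>'" and "\<kappa> > 0"
  shows "\<exists>F0 \<eta>. finite F0 \<and> \<eta> > 0 \<and> (\<forall>x y. (\<forall>s\<in>F0. \<rho> (act s x) (act s y) < \<eta>) \<longrightarrow> \<rho>' x y < \<kappa>)"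
proof -
  have c: "continuous_on UNIV (\<lambda>(x, y). \<rho> x y)" using assms(3) unfolding continuous_pseudometric_def by auto
  have c': "continuous_on UNIV (\<lambda>(x, y). \<rho>' x y)" using assms(5) unfolding continuous_pseudometric_def by auto
  have pm': "pseudometric \<rho>'" using assms(5) unfolding continuous_pseudometric_def by auto
  have ca: "continuous_on UNIV (act s)" for s using assms(2) unfolding continuous_monoid_action_def by auto
  define K where "K = {p::'x\<times>'x. \<kappa> \<le> \<rho>' (fst p) (snd p)}"
  have "closed K" unfolding K_def
    by (rule closed_Collect_le[OF continuous_on_const cont_pm_comp[OF c']])
      (auto intro: continuous_on_fst continuous_on_snd continuous_on_id)
  moreover have "compact (UNIV :: ('x\<times>'x) set)"
    using compact_Times[OF assms(1) assms(1)] by simp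
  ultimately have cK: "compact K" using closed_Int_compact[of K UNIV] by simp
  define f where "f = (\<lambda>(s::'m, r::real). {p::'x\<times>'x. r < \<rho> (act s (fst p)) (act s (snd p))})"
  have op: "open (f sr)" for sr
  proof -
    obtain s r where sr: "sr = (s, r)" by (cases sr)
    have "continuous_on UNIV (\<lambda>p::'x\<times>'x. act s (fst p))"
      by (rule continuous_on_compose2[OF ca continuous_on_fst]) (auto intro: continuous_on_id)
    moreover have "continuous_on UNIV (\<lambda>p::'x\<times>'x. act s (snd p))"
      by (rule continuous_on_compose2[OF ca continuous_on_snd]) (auto intro: continuous_on_id)
    ultimately have "open {p::'x\<times>'x. r < \<rho> (act s (fst p)) (act s (snd p))}"
      by (intro open_Collect_less continuous_on_const cont_pm_comp[OF c])
    then show ?thesis unfolding f_def sr by simp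
  qed
  have cov: "K \<subseteq> \<Union> (f ` (UNIV \<times> {0<..}))"
  proof
    fix p assume "p \<in> K"
    then have "fst p \<noteq> snd p" using pm' assms(6) unfolding K_def pseudometric_def by auto
    then obtain s where "\<rho> (act s (fst p)) (act s (snd p)) > 0"
      using assms(4) unfolding dynamically_generating_def by blast
    then have "p \<in> f (s, \<rho> (act s (fst p)) (act s (snd p)) / 2)" unfolding f_def by simp
    moreover have "(s, \<rho> (act s (fst p)) (act s (snd p)) / 2) \<in> UNIV \<times> {0<..}"
      using \<open>\<rho> (act s (fst p)) (act s (snd p)) > 0\<close> by simp
    ultimately show "p \<in> \<Union> (f ` (UNIV \<times> {0<..}))" by blast
  qed
  obtain C' where C': "C' \<subseteq> UNIV \<times> {0<..}" "finite C'" "K \<subseteq> \<Union> (f ` C')"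
    by (rule compactE_image[OF cK op cov])
  define \<eta> where "\<eta> = (if C' = {} then 1 else Min (snd ` C'))"
  have \<eta>pos: "\<eta> > 0"
    using C' unfolding \<eta>_def by (auto simp: Min_gr_iff)
  have \<eta>le: "\<eta> \<le> r" if "(s, r) \<in> C'" for s r
    using that C'(2) unfolding \<eta>_def by (auto intro!: Min_le simp: rev_image_eqI)
  show ?thesis
  proof (intro exI[of _ "fst ` C'"] exI[of _ \<eta>] conjI allI impI)
    show "finite (fst ` C')" using C' by simp
    show "\<eta> > 0" by (rule \<eta>pos)
    fix x y assume H: "\<forall>s\<in>fst ` C'. \<rho> (act s x) (act s y) < \<eta>"
    show "\<rho>' x y < \<kappa>"
    proof (rule ccontr)
      assume "\<not> \<rho>' x y < \<kappa>"
      then have "(x, y) \<in> K" unfolding K_def by simp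
      then obtain s r where sr: "(s, r) \<in> C'" "r < \<rho> (act s x) (act s y)"
        using C'(3) unfolding f_def by auto
      have "\<rho> (act s x) (act s y) < \<eta>" using H sr(1) by force
      then show False using \<eta>le[OF sr(1)] sr(2) by simp
    qed
  qed
qed



lemma sqrt_le_iff_sq: "0 \<le> d \<Longrightarrow> sqrt a \<le> d \<longleftrightarrow> a \<le> d\<^sup>2"
  by (metis real_sqrt_abs abs_of_nonneg real_sqrt_le_iff)

lemma rho2_le_iff:
  assumes "finite D" "D \<noteq> {}" "0 \<le> \<delta>"
  shows "rho2 D \<rho> \<phi> \<psi> \<le> \<delta> \<longleftrightarrow> (\<Sum>v\<in>D. (\<rho> (\<phi> v) (\<psi> v))\<^sup>2) \<le> \<delta>\<^sup>2 * real (card D)"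
proof -
  have n: "real (card D) > 0" using assms by (simp add: card_gt_0_iff)
  have "rho2 D \<rho> \<phi> \<psi> \<le> \<delta> \<longleftrightarrow> (\<Sum>v\<in>D. (\<rho> (\<phi> v) (\<psi> v))\<^sup>2) / real (card D) \<le> \<delta>\<^sup>2"
    unfolding rho2_def using sqrt_le_iff_sq[OF assms(3)] by blast
  also have "\<dots> \<longleftrightarrow> (\<Sum>v\<in>D. (\<rho> (\<phi> v) (\<psi> v))\<^sup>2) \<le> \<delta>\<^sup>2 * real (card D)"
    using n by (simp add: pos_divide_le_eq)
  finally show ?thesis .
qed

lemma cheb:
  fixes g :: "'d \<Rightarrow> real"
  assumes "finite D" "(\<Sum>v\<in>D. (g v)\<^sup>2) \<le> a" "c > 0"
  shows "real (card {v\<in>D. c \<le> g v}) * c\<^sup>2 \<le> a"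
proof -
  have "real (card {v\<in>D. c \<le> g v}) * c\<^sup>2 = (\<Sum>v\<in>{v\<in>D. c \<le> g v}. c\<^sup>2)" by simp
  also have "\<dots> \<le> (\<Sum>v\<in>{v\<in>D. c \<le> g v}. (g v)\<^sup>2)"
    by (rule sum_mono) (use assms(3) in \<open>auto intro: power_mono\<close>)
  also have "\<dots> \<le> (\<Sum>v\<in>D. (g v)\<^sup>2)"
    by (rule sum_mono2) (use assms(1) in auto)
  finally show ?thesis using assms(2) by linarith
qed

lemma powr_ge1_aux:
  fixes t y :: real
  assumes "0 < t" "t \<le> 1" "y \<le> 0"
  shows "1 \<le> t powr y"
proof -
  have "t powr y = (1 / t) powr (- y)" using assms by (simp add: powr_divide powr_minus_divide)
  moreover have "1 \<le> 1 / t" using assms by simp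
  ultimately show ?thesis using ge_one_powr_ge_zero[of "1/t" "-y"] assms by simp
qed

lemma pow_card_prod:
  assumes "finite D"
  shows "(t::real) ^ card {v\<in>D. P v} = (\<Prod>v\<in>D. if P v then t else 1)"
proof -
  have "(\<Prod>v\<in>D. if P v then t else 1) = prod (\<lambda>_. t) (D \<inter> {v. P v}) * prod (\<lambda>_. 1) (D \<inter> - {v. P v})"
    by (rule prod.If_cases[OF assms])
  also have "\<dots> = t ^ card (D \<inter> {v. P v})" by simp
  also have "D \<inter> {v. P v} = {v\<in>D. P v}" by blast
  finally show ?thesis by simp
qed

lemma count_patterns:
  fixes D :: "'d set" and A :: "'a set"
  assumes "finite D" "finite A" "a0 \<in> A" "0 < t" "t \<le> 1" "0 \<le> b"
  shows "real (card {f \<in> D \<rightarrow>\<^sub>E A. real (card {v\<in>D. f v \<noteq> a0}) \<le> b})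
           \<le> t powr (-b) * (1 + real (card A) * t) ^ card D"
proof -
  define W where "W = {f \<in> D \<rightarrow>\<^sub>E A. real (card {v\<in>D. f v \<noteq> a0}) \<le> b}"
  have finP: "finite (D \<rightarrow>\<^sub>E A)" using assms by (simp add: finite_PiE)
  have WP: "W \<subseteq> D \<rightarrow>\<^sub>E A" unfolding W_def by blast
  have "real (card W) = (\<Sum>f\<in>W. 1)" by simp
  also have "\<dots> \<le> (\<Sum>f\<in>W. t powr (real (card {v\<in>D. f v \<noteq> a0}) - b))"
    by (rule sum_mono, rule powr_ge1_aux) (use assms in \<open>auto simp: W_def\<close>)
  also have "\<dots> \<le> (\<Sum>f\<in>D \<rightarrow>\<^sub>E A. t powr (real (card {v\<in>D. f v \<noteq> a0}) - b))"
    by (rule sum_mono2[OF finP WP]) simp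
  also have "\<dots> = (\<Sum>f\<in>D \<rightarrow>\<^sub>E A. t powr (-b) * t ^ card {v\<in>D. f v \<noteq> a0})"
    using assms(4) by (intro sum.cong refl) (simp add: powr_add powr_realpow [symmetric] powr_diff powr_minus divide_inverse)
  also have "\<dots> = t powr (-b) * (\<Sum>f\<in>D \<rightarrow>\<^sub>E A. (\<Prod>v\<in>D. if f v \<noteq> a0 then t else 1))"
    by (simp add: sum_distrib_left pow_card_prod[OF assms(1)])
  also have "(\<Sum>f\<in>D \<rightarrow>\<^sub>E A. (\<Prod>v\<in>D. if f v \<noteq> a0 then t else 1)) = (\<Prod>v\<in>D. \<Sum>a\<in>A. if a \<noteq> a0 then t else 1)"
    using prod_sum_PiE[OF assms(1), of "\<lambda>_. A" "\<lambda>_ a. if a \<noteq> a0 then t else 1"] assms(2) by simp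
  also have "\<dots> \<le> (\<Prod>v\<in>D. 1 + real (card A) * t)"
  proof (rule prod_mono)
    fix v assume "v \<in> D"
    have "(\<Sum>a\<in>A. if a \<noteq> a0 then t else 1) = (if a0 \<noteq> a0 then t else 1) + (\<Sum>a\<in>A - {a0}. if a \<noteq> a0 then t else 1)"
      by (rule sum.remove[OF assms(2) assms(3)])
    also have "\<dots> = 1 + real (card (A - {a0})) * t" by simp
    also have "\<dots> \<le> 1 + real (card A) * t"
      using assms(4) card_Diff1_le[of A a0] by (simp add: mult_right_mono)
    finally have "(\<Sum>a\<in>A. if a \<noteq> a0 then t else 1) \<le> 1 + real (card A) * t" .
    moreover have "0 \<le> (\<Sum>a\<in>A. if a \<noteq> a0 then t else 1)" using assms(4) by (intro sum_nonneg) auto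
    ultimately show "0 \<le> (\<Sum>a\<in>A. if a \<noteq> a0 then t else 1) \<and> (\<Sum>a\<in>A. if a \<noteq> a0 then t else 1) \<le> 1 + real (card A) * t" by simp
  qed
  also have "(\<Prod>v\<in>D. 1 + real (card A) * t) = (1 + real (card A) * t) ^ card D" by simp
  finally show ?thesis unfolding W_def using assms(4) by (simp add: mult_left_mono)
qed



lemma pm_facts:
  assumes "pseudometric \<rho>"
  shows "0 \<le> \<rho> x y" "\<rho> x x = 0" "\<rho> x y = \<rho> y x" "\<rho> x z \<le> \<rho> x y + \<rho> y z"
  using assms unfolding pseudometric_def by blast+

lemma sep_number_nonneg: "0 \<le> sep_number e Z d"
proof -
  have "{} \<in> {S. S \<subseteq> Z \<and> finite S \<and> (\<forall>a\<in>S. \<forall>b\<in>S. a \<noteq> b \<longrightarrow> d a b \<ge> e)}" by simp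
  then have "ereal (real (card ({}::'a set))) \<le> sep_number e Z d"
    unfolding sep_number_def by (rule SUP_upper)
  then show ?thesis by (simp add: zero_ereal_def)
qed

lemma sep_number_upper:
  assumes "S \<subseteq> Z" "finite S" "\<forall>a\<in>S. \<forall>b\<in>S. a \<noteq> b \<longrightarrow> d a b \<ge> e"
  shows "ereal (real (card S)) \<le> sep_number e Z d"
  unfolding sep_number_def by (rule SUP_upper) (use assms in simp)

lemma sep_number_mono:
  assumes "Z \<subseteq> Z'"
  shows "sep_number e Z d \<le> sep_number e Z' d"
  unfolding sep_number_def by (rule SUP_subset_mono) (use assms in auto)

lemma rho_inf_ge:
  assumes "finite D" "v \<in> D"
  shows "\<rho> (\<phi> v) (\<psi> v) \<le> rho_inf D \<rho> \<phi> \<psi>"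
  unfolding rho_inf_def using assms by (intro Max_ge) auto

lemma rho_inf_attained:
  assumes "finite D" "D \<noteq> {}"
  shows "\<exists>v\<in>D. rho_inf D \<rho> \<phi> \<psi> = \<rho> (\<phi> v) (\<psi> v)"
proof -
  have "rho_inf D \<rho> \<phi> \<psi> \<in> (\<lambda>v. \<rho> (\<phi> v) (\<psi> v)) ` D"
    unfolding rho_inf_def using assms by (intro Max_in) auto
  then show ?thesis by auto
qed

lemma map_chebyshev:
  assumes "finite D" "D \<noteq> {}" "\<phi> \<in> Map_set act \<rho> F \<delta> D \<sigma>" "m \<in> F" "0 \<le> \<delta>" "c > 0"
  shows "real (card {v\<in>D. c \<le> \<rho> (\<phi> (\<sigma> m v)) (act m (\<phi> v))}) \<le> (\<delta> / c)\<^sup>2 * real (card D)"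
proof -
  have "rho2 D \<rho> (\<phi> \<circ> \<sigma> m) (\<lambda>v. act m (\<phi> v)) \<le> \<delta>" using assms(3,4) unfolding Map_set_def by auto
  then have "(\<Sum>v\<in>D. (\<rho> (\<phi> (\<sigma> m v)) (act m (\<phi> v)))\<^sup>2) \<le> \<delta>\<^sup>2 * real (card D)"
    using rho2_le_iff[OF assms(1,2,5), of \<rho> "\<phi> \<circ> \<sigma> m" "\<lambda>v. act m (\<phi> v)"] by simp
  from cheb[OF assms(1) this assms(6)]
  have "real (card {v\<in>D. c \<le> \<rho> (\<phi> (\<sigma> m v)) (act m (\<phi> v))}) * c\<^sup>2 \<le> \<delta>\<^sup>2 * real (card D)" .
  then show ?thesis using assms(6) by (simp add: power_divide field_simps)
qed



lemma sep_bound: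
  fixes act :: "'m \<Rightarrow> 'x \<Rightarrow> 'x" and \<sigma>' :: "'m \<Rightarrow> 'd \<Rightarrow> 'd"
    and \<rho> \<rho>' :: "'x \<Rightarrow> 'x \<Rightarrow> real" and C :: "'x set"
  assumes pm: "pseudometric \<rho>" and pm': "pseudometric \<rho>'"
    and fin: "finite D'" and ne: "D' \<noteq> {}" and maps: "\<forall>s. \<forall>v\<in>D'. \<sigma>' s v \<in> D'"
    and F0: "finite F0" and \<eta>: "\<eta> > 0"
    and ctrl: "\<forall>x y. (\<forall>s\<in>F0. \<rho> (act s x) (act s y) < \<eta>) \<longrightarrow> \<rho>' x y < \<epsilon>"
    and Cfin: "finite C" and cells: "\<forall>x. \<exists>c\<in>C. \<rho>' c x < \<epsilon> / 2"
    and \<delta>: "\<delta>'' > 0" and Z: "Z \<subseteq> Map_set act \<rho> F0 \<delta>'' D' \<sigma>'"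
  shows "sep_number \<epsilon> Z (rho_inf D' \<rho>')
    \<le> ereal (real (card {f \<in> D' \<rightarrow>\<^sub>E insert None (Some ` C).
          real (card {v\<in>D'. f v \<noteq> None}) \<le> real (card F0) * (3 * \<delta>'' / \<eta>)\<^sup>2 * real (card D')}))
       * sep_number (\<eta> / 3) Z (rho_inf D' \<rho>)"
proof -
  define A where "A = insert None (Some ` C)"
  define W where "W = {f \<in> D' \<rightarrow>\<^sub>E A.
          real (card {v\<in>D'. f v \<noteq> None}) \<le> real (card F0) * (3 * \<delta>'' / \<eta>)\<^sup>2 * real (card D')}"
  define N where "N = sep_number (\<eta> / 3) Z (rho_inf D' \<rho>)"
  define cell where "cell x = (SOME c. c \<in> C \<and> \<rho>' c x < \<epsilon> / 2)" for x
  have cell: "cell x \<in> C \<and> \<rho>' (cell x) x < \<epsilon> / 2" for x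
  proof -
    have "\<exists>c. c \<in> C \<and> \<rho>' c x < \<epsilon> / 2" using cells by blast
    then show ?thesis unfolding cell_def by (rule someI_ex)
  qed
  define B where "B \<phi> = {v\<in>D'. \<exists>s\<in>F0. \<eta> / 3 \<le> \<rho> (\<phi> (\<sigma>' s v)) (act s (\<phi> v))}" for \<phi> :: "'d \<Rightarrow> 'x"
  define pat where "pat \<phi> = (\<lambda>v. if v \<in> D' then (if v \<in> B \<phi> then Some (cell (\<phi> v)) else None) else undefined)"
    for \<phi> :: "'d \<Rightarrow> 'x"
  have finW: "finite W" unfolding W_def A_def using fin Cfin
    by (intro finite_subset[OF _ finite_PiE[of D' "\<lambda>_. insert None (Some ` C)"]]) auto
  have noneW: "(\<lambda>v\<in>D'. None) \<in> W" unfolding W_def A_def using \<eta> \<delta> by (auto simp: PiE_def)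
  have cardW: "card W \<ge> 1" using finW noneW by (metis One_nat_def Suc_leI card_gt_0_iff empty_iff)
  have patW: "pat \<phi> \<in> W" if "\<phi> \<in> Z" for \<phi>
  proof -
    have "pat \<phi> \<in> D' \<rightarrow>\<^sub>E A" unfolding pat_def A_def using cell by (auto simp: PiE_def extensional_def)
    moreover have "{v\<in>D'. pat \<phi> v \<noteq> None} = B \<phi>" unfolding pat_def B_def by auto
    moreover have "real (card (B \<phi>)) \<le> real (card F0) * (3 * \<delta>'' / \<eta>)\<^sup>2 * real (card D')"
    proof -
      have "B \<phi> = (\<Union>s\<in>F0. {v\<in>D'. \<eta> / 3 \<le> \<rho> (\<phi> (\<sigma>' s v)) (act s (\<phi> v))})" unfolding B_def by auto
      then have "card (B \<phi>) \<le> (\<Sum>s\<in>F0. card {v\<in>D'. \<eta> / 3 \<le> \<rho> (\<phi> (\<sigma>' s v)) (act s (\<phi> v))})"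
        using card_UN_le[OF F0, of "\<lambda>s. {v\<in>D'. \<eta> / 3 \<le> \<rho> (\<phi> (\<sigma>' s v)) (act s (\<phi> v))}"] by simp
      then have "real (card (B \<phi>)) \<le> (\<Sum>s\<in>F0. real (card {v\<in>D'. \<eta> / 3 \<le> \<rho> (\<phi> (\<sigma>' s v)) (act s (\<phi> v))}))"
        by (simp only: of_nat_sum[symmetric] of_nat_le_iff)
      also have "\<dots> \<le> (\<Sum>s\<in>F0. (\<delta>'' / (\<eta> / 3))\<^sup>2 * real (card D'))"
      proof (rule sum_mono)
        fix s assume "s \<in> F0"
        show "real (card {v\<in>D'. \<eta> / 3 \<le> \<rho> (\<phi> (\<sigma>' s v)) (act s (\<phi> v))}) \<le> (\<delta>'' / (\<eta> / 3))\<^sup>2 * real (card D')"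
          by (rule map_chebyshev[OF fin ne _ \<open>s \<in> F0\<close>]) (use that Z \<delta> \<eta> in auto)
      qed
      also have "\<dots> = real (card F0) * (3 * \<delta>'' / \<eta>)\<^sup>2 * real (card D')"
      proof -
        have "\<delta>'' / (\<eta> / 3) = 3 * \<delta>'' / \<eta>" by simp
        then show ?thesis by (simp only: sum_constant mult.assoc)
      qed
      finally show ?thesis .
    qed
    ultimately show ?thesis unfolding W_def by simp
  qed
  have fibsep: "rho_inf D' \<rho> \<phi> \<psi> \<ge> \<eta> / 3"
    if "\<phi> \<in> Z" "\<psi> \<in> Z" "pat \<phi> = pat \<psi>" "rho_inf D' \<rho>' \<phi> \<psi> \<ge> \<epsilon>" for \<phi> \<psi>
  proof -
    obtain v where v: "v \<in> D'" "rho_inf D' \<rho>' \<phi> \<psi> = \<rho>' (\<phi> v) (\<psi> v)" using rho_inf_attained[OF fin ne] by blast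
    have big: "\<rho>' (\<phi> v) (\<psi> v) \<ge> \<epsilon>" using v that(4) by simp
    have eqv: "pat \<phi> v = pat \<psi> v" using that(3) by simp
    have nB: "v \<notin> B \<phi>"
    proof
      assume "v \<in> B \<phi>"
      then have "v \<in> B \<psi>" "cell (\<phi> v) = cell (\<psi> v)" using eqv v(1) unfolding pat_def by (auto split: if_splits)
      then have "\<rho>' (\<phi> v) (\<psi> v) < \<epsilon>"
      proof -
        have t: "\<rho>' (\<phi> v) (\<psi> v) \<le> \<rho>' (\<phi> v) (cell (\<phi> v)) + \<rho>' (cell (\<phi> v)) (\<psi> v)"
          by (rule pm_facts(4)[OF pm'])
        have "\<rho>' (\<phi> v) (cell (\<phi> v)) < \<epsilon> / 2"
          using cell[of "\<phi> v"] pm_facts(3)[OF pm', of "cell (\<phi> v)" "\<phi> v"] by simp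
        moreover have "\<rho>' (cell (\<phi> v)) (\<psi> v) < \<epsilon> / 2"
          using cell[of "\<psi> v"] \<open>cell (\<phi> v) = cell (\<psi> v)\<close> by simp
        ultimately show ?thesis using t by linarith
      qed
      then show False using big by simp
    qed
    have nB': "v \<notin> B \<psi>" using nB eqv v(1) unfolding pat_def by (auto split: if_splits)
    have "\<not> (\<forall>s\<in>F0. \<rho> (act s (\<phi> v)) (act s (\<psi> v)) < \<eta>)"
    proof
      assume "\<forall>s\<in>F0. \<rho> (act s (\<phi> v)) (act s (\<psi> v)) < \<eta>"
      then have "\<rho>' (\<phi> v) (\<psi> v) < \<epsilon>" using ctrl by blast
      then show False using big by linarith
    qed
    then obtain s where s: "s \<in> F0" "\<rho> (act s (\<phi> v)) (act s (\<psi> v)) \<ge> \<eta>"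
      by (auto simp: not_less)
    have g1: "\<rho> (\<phi> (\<sigma>' s v)) (act s (\<phi> v)) < \<eta> / 3" using nB s(1) v(1) unfolding B_def by auto
    have g2: "\<rho> (\<psi> (\<sigma>' s v)) (act s (\<psi> v)) < \<eta> / 3" using nB' s(1) v(1) unfolding B_def by auto
    have "\<rho> (act s (\<phi> v)) (act s (\<psi> v)) \<le> \<rho> (act s (\<phi> v)) (\<phi> (\<sigma>' s v)) + \<rho> (\<phi> (\<sigma>' s v)) (act s (\<psi> v))"
      by (rule pm_facts(4)[OF pm])
    also have "\<rho> (\<phi> (\<sigma>' s v)) (act s (\<psi> v)) \<le> \<rho> (\<phi> (\<sigma>' s v)) (\<psi> (\<sigma>' s v)) + \<rho> (\<psi> (\<sigma>' s v)) (act s (\<psi> v))"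
      by (rule pm_facts(4)[OF pm])
    finally have "\<eta> / 3 \<le> \<rho> (\<phi> (\<sigma>' s v)) (\<psi> (\<sigma>' s v))"
      using s(2) g1 g2 pm_facts(3)[OF pm, of "act s (\<phi> v)" "\<phi> (\<sigma>' s v)"] by linarith
    also have "\<dots> \<le> rho_inf D' \<rho> \<phi> \<psi>" using rho_inf_ge[OF fin] maps v(1) by blast
    finally show ?thesis .
  qed
  have N0: "0 \<le> N" unfolding N_def by (rule sep_number_nonneg)
  have "sep_number \<epsilon> Z (rho_inf D' \<rho>') \<le> ereal (real (card W)) * N"
    unfolding sep_number_def[of \<epsilon>]
  proof (rule SUP_least)
    fix S assume "S \<in> {S. S \<subseteq> Z \<and> finite S \<and> (\<forall>a\<in>S. \<forall>b\<in>S. a \<noteq> b \<longrightarrow> rho_inf D' \<rho>' a b \<ge> \<epsilon>)}"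
    then have S: "S \<subseteq> Z" "finite S" "\<forall>a\<in>S. \<forall>b\<in>S. a \<noteq> b \<longrightarrow> rho_inf D' \<rho>' a b \<ge> \<epsilon>" by auto
    define T where "T p = {\<phi>\<in>S. pat \<phi> = p}" for p
    have Tle: "ereal (real (card (T p))) \<le> N" for p
      unfolding N_def
    proof (rule sep_number_upper)
      show "T p \<subseteq> Z" using S unfolding T_def by auto
      show "finite (T p)" using S unfolding T_def by auto
      show "\<forall>a\<in>T p. \<forall>b\<in>T p. a \<noteq> b \<longrightarrow> \<eta> / 3 \<le> rho_inf D' \<rho> a b"
      proof (intro ballI impI)
        fix a b assume ab: "a \<in> T p" "b \<in> T p" "a \<noteq> b"
        show "\<eta> / 3 \<le> rho_inf D' \<rho> a b"
        proof (rule fibsep)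
          show "a \<in> Z" "b \<in> Z" using ab S(1) unfolding T_def by auto
          show "pat a = pat b" using ab unfolding T_def by simp
          show "\<epsilon> \<le> rho_inf D' \<rho>' a b" using ab S(3) unfolding T_def by simp
        qed
      qed
    qed
    show "ereal (real (card S)) \<le> ereal (real (card W)) * N"
    proof (cases "N = \<infinity>")
      case True
      then show ?thesis using cardW by simp
    next
      case False
      then obtain r where r: "N = ereal r" using N0 by (cases N) auto
      have r0: "0 \<le> r" using N0 r by simp
      have Tr: "real (card (T p)) \<le> r" for p using Tle[of p] r by simp
      have Seq: "S = (\<Union>p\<in>pat ` S. T p)" unfolding T_def by auto
      have cS: "card S = card (\<Union>p\<in>pat ` S. T p)" using Seq by (rule arg_cong)
      have "card (\<Union>p\<in>pat ` S. T p) \<le> (\<Sum>p\<in>pat ` S. card (T p))"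
        by (rule card_UN_le) (use S(2) in simp)
      then have "card S \<le> (\<Sum>p\<in>pat ` S. card (T p))" unfolding cS[symmetric] .
      then have "real (card S) \<le> (\<Sum>p\<in>pat ` S. real (card (T p)))" by (simp only: of_nat_sum[symmetric] of_nat_le_iff)
      also have "\<dots> \<le> (\<Sum>p\<in>pat ` S. r)" by (rule sum_mono) (rule Tr)
      also have "\<dots> = real (card (pat ` S)) * r" by simp
      also have "\<dots> \<le> real (card W) * r"
      proof -
        have "pat ` S \<subseteq> W" using patW S(1) by auto
        then have "card (pat ` S) \<le> card W" by (rule card_mono[OF finW])
        then show ?thesis using r0 by (simp add: mult_right_mono)
      qed
      finally show ?thesis using r by simp
    qed
  qed
  then show ?thesis unfolding W_def A_def N_def .
qed



lemma map_incl_step: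
  fixes act :: "'m::monoid_mult \<Rightarrow> 'x \<Rightarrow> 'x" and \<sigma>' :: "'m \<Rightarrow> 'd \<Rightarrow> 'd"
    and \<rho> \<rho>' :: "'x \<Rightarrow> 'x \<Rightarrow> real"
  assumes actmul: "\<forall>m1 m2 x. act (m1 * m2) x = act m1 (act m2 x)"
    and pm: "pseudometric \<rho>" and pm': "pseudometric \<rho>'"
    and fin: "finite D'" and ne: "D' \<noteq> {}" and maps: "\<forall>s. \<forall>v\<in>D'. \<sigma>' s v \<in> D'"
    and bound: "\<forall>x y. \<rho> x y \<le> R"
    and ctrl: "\<forall>x y. (\<forall>s\<in>F0. \<rho>' (act s x) (act s y) < \<eta>0) \<longrightarrow> \<rho> x y < \<kappa>"
    and \<eta>0: "\<eta>0 > 0" and \<kappa>: "\<kappa> \<ge> 0" and F0: "finite F0"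
    and deg: "\<forall>v\<in>D'. card {w\<in>D'. \<sigma>' m w = v} \<le> \<Delta>"
    and ham: "\<forall>s\<in>F0. ham_dist D' (\<sigma>' (s * m)) (\<sigma>' s \<circ> \<sigma>' m) \<le> \<gamma>"
    and \<phi>: "\<phi> \<in> Map_set act \<rho>' F' \<delta>' D' \<sigma>'" and F'1: "F0 \<subseteq> F'" and F'2: "(\<lambda>s. s * m) ` F0 \<subseteq> F'"
    and \<delta>': "\<delta>' \<ge> 0"
  shows "(\<Sum>v\<in>D'. (\<rho> (\<phi> (\<sigma>' m v)) (act m (\<phi> v)))\<^sup>2)
    \<le> (\<kappa>\<^sup>2 + R\<^sup>2 * real (card F0) * (\<gamma> + (1 + real \<Delta>) * (\<delta>' / (\<eta>0 / 2))\<^sup>2)) * real (card D')"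
proof -
  define n where "n = real (card D')"
  define q where "q = (\<delta>' / (\<eta>0 / 2))\<^sup>2"
  have n0: "n > 0" unfolding n_def using fin ne by (simp add: card_gt_0_iff)
  have c2: "\<eta>0 / 2 > 0" using \<eta>0 by simp
  define Z where "Z s = {w\<in>D'. \<eta>0 / 2 \<le> \<rho>' (\<phi> (\<sigma>' s w)) (act s (\<phi> w))}" for s
  define Ha where "Ha s = {v\<in>D'. \<sigma>' (s * m) v \<noteq> (\<sigma>' s \<circ> \<sigma>' m) v}" for s
  define Hb where "Hb s = {v\<in>D'. \<eta>0 / 2 \<le> \<rho>' (\<phi> (\<sigma>' (s * m) v)) (act (s * m) (\<phi> v))}" for s
  define Hc where "Hc s = {v\<in>D'. \<sigma>' m v \<in> Z s}" for s
  define Bad where "Bad = (\<Union>s\<in>F0. Ha s \<union> Hb s \<union> Hc s)"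
  have cZ: "real (card (Z s)) \<le> q * n" if "s \<in> F0" for s
    unfolding Z_def q_def n_def
    by (rule map_chebyshev[OF fin ne \<phi> _ \<delta>' c2]) (use that F'1 in auto)
  have cHb: "real (card (Hb s)) \<le> q * n" if "s \<in> F0" for s
    unfolding Hb_def q_def n_def
    by (rule map_chebyshev[OF fin ne \<phi> _ \<delta>' c2]) (use that F'2 in auto)
  have cHa: "real (card (Ha s)) \<le> \<gamma> * n" if "s \<in> F0" for s
  proof -
    have eq: "ham_dist D' (\<sigma>' (s * m)) (\<sigma>' s \<circ> \<sigma>' m) = real (card (Ha s)) / n"
      unfolding ham_dist_def Ha_def n_def by simp
    have "ham_dist D' (\<sigma>' (s * m)) (\<sigma>' s \<circ> \<sigma>' m) \<le> \<gamma>" using ham that by blast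
    then have "real (card (Ha s)) / n \<le> \<gamma>" unfolding eq .
    then show ?thesis using n0 by (simp add: pos_divide_le_eq)
  qed
  have cHc: "real (card (Hc s)) \<le> real \<Delta> * (q * n)" if "s \<in> F0" for s
  proof -
    have "Hc s = (\<Union>w\<in>Z s. {v\<in>D'. \<sigma>' m v = w})" unfolding Hc_def by auto
    then have "card (Hc s) \<le> (\<Sum>w\<in>Z s. card {v\<in>D'. \<sigma>' m v = w})"
      using card_UN_le[of "Z s" "\<lambda>w. {v\<in>D'. \<sigma>' m v = w}"] fin unfolding Z_def by simp
    also have "\<dots> \<le> (\<Sum>w\<in>Z s. \<Delta>)"
      by (rule sum_mono) (use deg in \<open>auto simp: Z_def\<close>)
    also have "\<dots> = \<Delta> * card (Z s)" by simp
    finally have "real (card (Hc s)) \<le> real \<Delta> * real (card (Z s))"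
      by (metis of_nat_le_iff of_nat_mult)
    also have "\<dots> \<le> real \<Delta> * (q * n)" using cZ[OF that] by (simp add: mult_left_mono)
    finally show ?thesis .
  qed
  have cBad: "real (card Bad) \<le> real (card F0) * (\<gamma> + (1 + real \<Delta>) * q) * n"
  proof -
    have "card Bad \<le> (\<Sum>s\<in>F0. card (Ha s \<union> Hb s \<union> Hc s))"
      unfolding Bad_def by (rule card_UN_le[OF F0])
    then have "real (card Bad) \<le> (\<Sum>s\<in>F0. real (card (Ha s \<union> Hb s \<union> Hc s)))"
      by (simp only: of_nat_sum[symmetric] of_nat_le_iff)
    also have "\<dots> \<le> (\<Sum>s\<in>F0. (\<gamma> + (1 + real \<Delta>) * q) * n)"
    proof (rule sum_mono)
      fix s assume s: "s \<in> F0"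
      have "card (Ha s \<union> Hb s \<union> Hc s) \<le> card (Ha s) + card (Hb s) + card (Hc s)"
        by (metis card_Un_le add_le_mono1 order_trans)
      then have "real (card (Ha s \<union> Hb s \<union> Hc s)) \<le> real (card (Ha s)) + real (card (Hb s)) + real (card (Hc s))"
        by linarith
      also have "\<dots> \<le> \<gamma> * n + q * n + real \<Delta> * (q * n)" using cHa[OF s] cHb[OF s] cHc[OF s] by linarith
      also have "\<dots> = (\<gamma> + (1 + real \<Delta>) * q) * n" by (simp add: algebra_simps)
      finally show "real (card (Ha s \<union> Hb s \<union> Hc s)) \<le> (\<gamma> + (1 + real \<Delta>) * q) * n" .
    qed
    also have "\<dots> = real (card F0) * (\<gamma> + (1 + real \<Delta>) * q) * n" by simp
    finally show ?thesis .
  qed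
  have good: "\<rho> (\<phi> (\<sigma>' m v)) (act m (\<phi> v)) < \<kappa>" if v: "v \<in> D'" "v \<notin> Bad" for v
  proof -
    have "\<rho>' (act s (\<phi> (\<sigma>' m v))) (act s (act m (\<phi> v))) < \<eta>0" if s: "s \<in> F0" for s
    proof -
      have a: "\<sigma>' (s * m) v = \<sigma>' s (\<sigma>' m v)" using v s unfolding Bad_def Ha_def by auto
      have b: "\<rho>' (\<phi> (\<sigma>' (s * m) v)) (act (s * m) (\<phi> v)) < \<eta>0 / 2"
        using v s unfolding Bad_def Hb_def by auto
      have mv: "\<sigma>' m v \<in> D'" using maps v(1) by blast
      have c: "\<rho>' (\<phi> (\<sigma>' s (\<sigma>' m v))) (act s (\<phi> (\<sigma>' m v))) < \<eta>0 / 2"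
        using v s mv unfolding Bad_def Hc_def Z_def by auto
      have am: "act (s * m) (\<phi> v) = act s (act m (\<phi> v))" using actmul by blast
      have "\<rho>' (act s (\<phi> (\<sigma>' m v))) (act s (act m (\<phi> v)))
          \<le> \<rho>' (act s (\<phi> (\<sigma>' m v))) (\<phi> (\<sigma>' s (\<sigma>' m v))) + \<rho>' (\<phi> (\<sigma>' s (\<sigma>' m v))) (act s (act m (\<phi> v)))"
        by (rule pm_facts(4)[OF pm'])
      moreover have "\<rho>' (act s (\<phi> (\<sigma>' m v))) (\<phi> (\<sigma>' s (\<sigma>' m v))) < \<eta>0 / 2"
        using c pm_facts(3)[OF pm'] by metis
      moreover have "\<rho>' (\<phi> (\<sigma>' s (\<sigma>' m v))) (act s (act m (\<phi> v))) < \<eta>0 / 2"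
        using b unfolding a am .
      ultimately show ?thesis by linarith
    qed
    then show ?thesis using ctrl by blast
  qed
  define f where "f v = (\<rho> (\<phi> (\<sigma>' m v)) (act m (\<phi> v)))\<^sup>2" for v
  have "(\<Sum>v\<in>D'. f v) = (\<Sum>v\<in>D' - Bad. f v) + (\<Sum>v\<in>D' \<inter> Bad. f v)"
    by (metis fin sum.Int_Diff add.commute)
  also have "(\<Sum>v\<in>D' - Bad. f v) \<le> (\<Sum>v\<in>D'. \<kappa>\<^sup>2)"
  proof -
    have "(\<Sum>v\<in>D' - Bad. f v) \<le> (\<Sum>v\<in>D' - Bad. \<kappa>\<^sup>2)"
    proof (rule sum_mono)
      fix v assume "v \<in> D' - Bad"
      then have "\<rho> (\<phi> (\<sigma>' m v)) (act m (\<phi> v)) < \<kappa>" using good by blast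
      moreover have "0 \<le> \<rho> (\<phi> (\<sigma>' m v)) (act m (\<phi> v))" by (rule pm_facts(1)[OF pm])
      ultimately show "f v \<le> \<kappa>\<^sup>2" unfolding f_def by (simp add: power_mono)
    qed
    also have "\<dots> \<le> (\<Sum>v\<in>D'. \<kappa>\<^sup>2)" by (rule sum_mono2) (use fin in auto)
    finally show ?thesis .
  qed
  also have "(\<Sum>v\<in>D' \<inter> Bad. f v) \<le> (\<Sum>v\<in>D' \<inter> Bad. R\<^sup>2)"
  proof (rule sum_mono)
    fix v
    have "0 \<le> \<rho> (\<phi> (\<sigma>' m v)) (act m (\<phi> v))" by (rule pm_facts(1)[OF pm])
    then show "f v \<le> R\<^sup>2" unfolding f_def using bound by (simp add: power_mono)
  qed
  also have "(\<Sum>v\<in>D' \<inter> Bad. R\<^sup>2) \<le> R\<^sup>2 * real (card Bad)"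
  proof -
    have "card (D' \<inter> Bad) \<le> card Bad"
    proof -
      have "Bad \<subseteq> D'" unfolding Bad_def Ha_def Hb_def Hc_def by auto
      then show ?thesis by (simp add: Int_absorb1)
    qed
    then show ?thesis by (simp add: mult.commute mult_right_mono)
  qed
  also have "R\<^sup>2 * real (card Bad) \<le> R\<^sup>2 * (real (card F0) * (\<gamma> + (1 + real \<Delta>) * q) * n)"
    by (rule mult_left_mono[OF cBad]) simp
  finally have "(\<Sum>v\<in>D'. f v) \<le> \<kappa>\<^sup>2 * n + R\<^sup>2 * (real (card F0) * (\<gamma> + (1 + real \<Delta>) * q) * n)"
    unfolding n_def by (simp add: mult.commute)
  then show ?thesis unfolding f_def q_def n_def by (simp add: algebra_simps)
qed



lemma exists_small:
  fixes K a :: real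
  assumes "K \<ge> 0" "a > 0"
  shows "\<exists>y>0. K * y\<^sup>2 \<le> a"
proof -
  define y where "y = min 1 (a / (K + 1))"
  have y0: "y > 0" unfolding y_def using assms by simp
  have y1: "y \<le> 1" unfolding y_def by simp
  have y2: "y \<le> a / (K + 1)" unfolding y_def by simp
  have "y\<^sup>2 \<le> y" using y0 y1 by (simp add: power2_eq_square mult_left_le)
  then have "K * y\<^sup>2 \<le> K * y" using assms(1) by (simp add: mult_left_mono)
  also have "\<dots> \<le> K * (a / (K + 1))" using mult_left_mono[OF y2 assms(1)] by simp
  also have "\<dots> \<le> a"
  proof -
    have "K * (a / (K + 1)) = a * (K / (K + 1))" by simp
    also have "\<dots> \<le> a * 1" using assms by (intro mult_left_mono) auto
    finally show ?thesis by simp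
  qed
  finally show ?thesis using y0 by blast
qed

lemma ssa_facts:
  assumes "strong_sofic_approx le D \<sigma>"
  shows "directed_set le" "finite (D i)" "D i \<noteq> {}" "\<forall>s. \<forall>v\<in>D i. \<sigma> i s v \<in> D i"
    "((\<lambda>i. ham_dist (D i) (\<sigma> i (m1 * m2)) (\<sigma> i m1 \<circ> \<sigma> i m2)) \<longlongrightarrow> 0) (net_filter le)"
    "finite K \<Longrightarrow> \<exists>\<Delta>::nat. \<Delta> \<ge> 1 \<and> (\<forall>i. \<forall>k\<in>K. \<forall>v\<in>D i. card {w\<in>D i. \<sigma> i k w = v} \<le> \<Delta>)"
  using assms unfolding strong_sofic_approx_def by (simp_all add: image_subset_iff)

lemma map_incl:
  fixes act :: "'m::monoid_mult \<Rightarrow> 'x::topological_space \<Rightarrow> 'x"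
    and \<sigma> :: "'i \<Rightarrow> 'm \<Rightarrow> 'd \<Rightarrow> 'd"
  assumes cpt: "compact (UNIV :: 'x set)" and cma: "continuous_monoid_action act"
    and ssa: "strong_sofic_approx le D \<sigma>"
    and cpm: "continuous_pseudometric \<rho>" and cpm': "continuous_pseudometric \<rho>'"
    and dg': "dynamically_generating act \<rho>'"
    and F: "finite F" and \<delta>: "\<delta> > 0"
  shows "\<exists>F' \<delta>'. finite F' \<and> \<delta>' > 0 \<and>
    eventually (\<lambda>i. Map_set act \<rho>' F' \<delta>' (D i) (\<sigma> i) \<subseteq> Map_set act \<rho> F \<delta> (D i) (\<sigma> i)) (net_filter le)"
proof -
  have pm: "pseudometric \<rho>" and pm': "pseudometric \<rho>'" using cpm cpm' unfolding continuous_pseudometric_def by auto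
  have actmul: "\<forall>m1 m2 x. act (m1 * m2) x = act m1 (act m2 x)" using cma unfolding continuous_monoid_action_def by blast
  obtain R where R: "R > 0" "\<forall>x y. \<rho> x y \<le> R" using pm_bounded[OF cpt cpm] by blast
  define \<kappa> where "\<kappa> = \<delta> / 2"
  have \<kappa>0: "\<kappa> > 0" unfolding \<kappa>_def using \<delta> by simp
  obtain F0 \<eta>0 where F0: "finite F0" "\<eta>0 > 0"
    and ctrl: "\<forall>x y. (\<forall>s\<in>F0. \<rho>' (act s x) (act s y) < \<eta>0) \<longrightarrow> \<rho> x y < \<kappa>"
    using control[OF cpt cma cpm' dg' cpm \<kappa>0] by blast
  obtain \<Delta> :: nat where deg: "\<forall>i. \<forall>k\<in>F. \<forall>v\<in>D i. card {w\<in>D i. \<sigma> i k w = v} \<le> \<Delta>"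
    using ssa_facts(6)[OF ssa F] by blast
  define c where "c = real (card F0)"
  obtain y where y: "y > 0" "(R\<^sup>2 * c * (1 + real \<Delta>)) * y\<^sup>2 \<le> \<delta>\<^sup>2 / 4"
    using exists_small[of "R\<^sup>2 * c * (1 + real \<Delta>)" "\<delta>\<^sup>2 / 4"] \<delta> unfolding c_def by auto
  define \<delta>' where "\<delta>' = y * (\<eta>0 / 2)"
  have \<delta>'0: "\<delta>' > 0" unfolding \<delta>'_def using y F0 by simp
  have \<delta>'y: "\<delta>' / (\<eta>0 / 2) = y" unfolding \<delta>'_def using F0 by simp
  define \<gamma> where "\<gamma> = \<delta>\<^sup>2 / (4 * (R\<^sup>2 * (c + 1)))"
  have c0: "c \<ge> 0" unfolding c_def by simp
  have \<gamma>0: "\<gamma> > 0" unfolding \<gamma>_def using \<delta> R c0 by (simp add: add_nonneg_pos)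
  define F' where "F' = F \<union> F0 \<union> (\<lambda>p. fst p * snd p) ` (F0 \<times> F)"
  have finF': "finite F'" unfolding F'_def using F F0 by simp
  have ev: "eventually (\<lambda>i. \<forall>p\<in>F0 \<times> F. ham_dist (D i) (\<sigma> i (fst p * snd p)) (\<sigma> i (fst p) \<circ> \<sigma> i (snd p)) < \<gamma>) (net_filter le)"
  proof (rule eventually_ball_finite)
    show "finite (F0 \<times> F)" using F F0 by simp
    show "\<forall>p\<in>F0 \<times> F. \<forall>\<^sub>F i in net_filter le. ham_dist (D i) (\<sigma> i (fst p * snd p)) (\<sigma> i (fst p) \<circ> \<sigma> i (snd p)) < \<gamma>"
      using order_tendstoD(2)[OF ssa_facts(5)[OF ssa] \<gamma>0] by blast
  qed
  have "eventually (\<lambda>i. Map_set act \<rho>' F' \<delta>' (D i) (\<sigma> i) \<subseteq> Map_set act \<rho> F \<delta> (D i) (\<sigma> i)) (net_filter le)"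
  proof (rule eventually_mono[OF ev], rule subsetI)
    fix i \<phi>
    assume H: "\<forall>p\<in>F0 \<times> F. ham_dist (D i) (\<sigma> i (fst p * snd p)) (\<sigma> i (fst p) \<circ> \<sigma> i (snd p)) < \<gamma>"
      and \<phi>: "\<phi> \<in> Map_set act \<rho>' F' \<delta>' (D i) (\<sigma> i)"
    have fin: "finite (D i)" and ne: "D i \<noteq> {}" and maps: "\<forall>s. \<forall>v\<in>D i. \<sigma> i s v \<in> D i"
      using ssa_facts[OF ssa] by auto
    have "rho2 (D i) \<rho> (\<phi> \<circ> \<sigma> i m) (\<lambda>v. act m (\<phi> v)) \<le> \<delta>" if m: "m \<in> F" for m
    proof -
      have step: "(\<Sum>v\<in>D i. (\<rho> (\<phi> (\<sigma> i m v)) (act m (\<phi> v)))\<^sup>2)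
        \<le> (\<kappa>\<^sup>2 + R\<^sup>2 * real (card F0) * (\<gamma> + (1 + real \<Delta>) * (\<delta>' / (\<eta>0 / 2))\<^sup>2)) * real (card (D i))"
      proof (rule map_incl_step[OF actmul pm pm' fin ne maps])
        show "\<forall>x y. \<rho> x y \<le> R" using R by blast
        show "\<forall>x y. (\<forall>s\<in>F0. \<rho>' (act s x) (act s y) < \<eta>0) \<longrightarrow> \<rho> x y < \<kappa>" by (rule ctrl)
        show "\<eta>0 > 0" "\<kappa> \<ge> 0" "finite F0" using F0 \<kappa>0 by auto
        show "\<forall>v\<in>D i. card {w \<in> D i. \<sigma> i m w = v} \<le> \<Delta>" using deg m by blast
        show "\<forall>s\<in>F0. ham_dist (D i) (\<sigma> i (s * m)) (\<sigma> i s \<circ> \<sigma> i m) \<le> \<gamma>"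
          using H m by force
        show "\<phi> \<in> Map_set act \<rho>' F' \<delta>' (D i) (\<sigma> i)" by (rule \<phi>)
        show "F0 \<subseteq> F'" unfolding F'_def by blast
        show "(\<lambda>s. s * m) ` F0 \<subseteq> F'" unfolding F'_def using m by force
        show "\<delta>' \<ge> 0" using \<delta>'0 by simp
      qed
      have "\<kappa>\<^sup>2 + R\<^sup>2 * real (card F0) * (\<gamma> + (1 + real \<Delta>) * (\<delta>' / (\<eta>0 / 2))\<^sup>2)
          = \<kappa>\<^sup>2 + R\<^sup>2 * c * \<gamma> + (R\<^sup>2 * c * (1 + real \<Delta>)) * y\<^sup>2"
        unfolding \<delta>'y c_def by (simp add: algebra_simps)
      also have "\<dots> \<le> \<delta>\<^sup>2 / 4 + \<delta>\<^sup>2 / 4 + \<delta>\<^sup>2 / 4"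
      proof -
        have "\<kappa>\<^sup>2 = \<delta>\<^sup>2 / 4" unfolding \<kappa>_def by (simp add: power_divide)
        moreover have "R\<^sup>2 * c * \<gamma> \<le> \<delta>\<^sup>2 / 4"
        proof -
          have "R\<^sup>2 * c * \<gamma> = (\<delta>\<^sup>2 / 4) * (c / (c + 1))"
          proof -
            have u: "R\<^sup>2 > 0" using R by simp
            have v: "c + 1 > 0" using c0 by simp
            show ?thesis unfolding \<gamma>_def using u v by (simp add: divide_simps)
          qed
          also have "\<dots> \<le> (\<delta>\<^sup>2 / 4) * 1" using c0 by (intro mult_left_mono) auto
          finally show ?thesis by simp
        qed
        ultimately show ?thesis using y(2) by linarith
      qed
      also have "\<dots> \<le> \<delta>\<^sup>2" by simp
      finally have "(\<kappa>\<^sup>2 + R\<^sup>2 * real (card F0) * (\<gamma> + (1 + real \<Delta>) * (\<delta>' / (\<eta>0 / 2))\<^sup>2)) * real (card (D i))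
          \<le> \<delta>\<^sup>2 * real (card (D i))" by (simp add: mult_right_mono)
      with step have "(\<Sum>v\<in>D i. (\<rho> (\<phi> (\<sigma> i m v)) (act m (\<phi> v)))\<^sup>2) \<le> \<delta>\<^sup>2 * real (card (D i))" by linarith
      then show ?thesis using rho2_le_iff[OF fin ne, of \<delta> \<rho> "\<phi> \<circ> \<sigma> i m" "\<lambda>v. act m (\<phi> v)"] \<delta> by simp
    qed
    moreover have "\<phi> \<in> D i \<rightarrow>\<^sub>E UNIV" using \<phi> unfolding Map_set_def by blast
    ultimately show "\<phi> \<in> Map_set act \<rho> F \<delta> (D i) (\<sigma> i)" unfolding Map_set_def by blast
  qed
  then show ?thesis using finF' \<delta>'0 by blast
qed



lemma elog_bound:
  assumes x0: "0 \<le> x" and xy: "x \<le> ereal c * y" and c: "c \<ge> 1" and y0: "0 \<le> y"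
  shows "elog x \<le> ereal (ln c) + elog y"
proof (cases "x = 0")
  case True
  then show ?thesis unfolding elog_def by simp
next
  case False
  then have xpos: "x > 0" using x0 by simp
  show ?thesis
  proof (cases y)
    case PInf
    then show ?thesis unfolding elog_def by simp
  next
    case MInf
    then show ?thesis using y0 by simp
  next
    case (real r)
    have r0: "r \<ge> 0" using y0 real by simp
    have "x \<le> ereal (c * r)" using xy real by simp
    then obtain s where s: "x = ereal s" "s \<le> c * r" using xpos by (cases x) auto
    have s0: "s > 0" using xpos s by simp
    then have r0': "r > 0" using s c r0 by (metis less_eq_real_def mult_zero_right not_le)
    have "ln s \<le> ln (c * r)" using s0 s(2) by simp
    also have "\<dots> = ln c + ln r" using c r0' by (simp add: ln_mult)
    finally have "ln s \<le> ln c + ln r" .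
    then show ?thesis unfolding elog_def using s s0 r0' real by simp
  qed
qed

lemma ereal_scale_add:
  assumes "a > 0"
  shows "ereal a * (ereal b + z) = ereal (a * b) + ereal a * z"
  using assms by (cases z) (auto simp: algebra_simps)

lemma Map_set_anti:
  assumes "F \<subseteq> F'" "\<delta>' \<le> \<delta>"
  shows "Map_set act r F' \<delta>' D \<sigma> \<subseteq> Map_set act r F \<delta> D \<sigma>"
  using assms unfolding Map_set_def by fastforce

lemma pattern_log_bound:
  fixes D :: "'d set" and A :: "'a set"
  assumes fin: "finite D" and ne: "D \<noteq> {}" and A: "finite A" "a0 \<in> A"
    and t: "0 < t" "t \<le> 1" and b: "0 \<le> b" "b \<le> \<beta> * real (card D)"
    and tA: "real (card A) * t \<le> \<theta> / 2" and \<beta>t: "\<beta> * ln (1 / t) \<le> \<theta> / 2"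
  shows "ln (real (card {f \<in> D \<rightarrow>\<^sub>E A. real (card {v\<in>D. f v \<noteq> a0}) \<le> b})) / real (card D) \<le> \<theta>"
    and "card {f \<in> D \<rightarrow>\<^sub>E A. real (card {v\<in>D. f v \<noteq> a0}) \<le> b} \<ge> 1"
proof -
  define W where "W = {f \<in> D \<rightarrow>\<^sub>E A. real (card {v\<in>D. f v \<noteq> a0}) \<le> b}"
  define n where "n = real (card D)"
  have n0: "n > 0" unfolding n_def using fin ne by (simp add: card_gt_0_iff)
  have finW: "finite W" unfolding W_def using fin A by (intro finite_subset[OF _ finite_PiE[of D "\<lambda>_. A"]]) auto
  have "(\<lambda>v\<in>D. a0) \<in> W" unfolding W_def using A b by (auto simp: PiE_def)
  then have cW: "card W \<ge> 1" using finW by (metis One_nat_def Suc_leI card_gt_0_iff empty_iff)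
  then show "card {f \<in> D \<rightarrow>\<^sub>E A. real (card {v\<in>D. f v \<noteq> a0}) \<le> b} \<ge> 1" unfolding W_def .
  have bound: "real (card W) \<le> t powr (-b) * (1 + real (card A) * t) ^ card D"
    unfolding W_def by (rule count_patterns[OF fin A t b(1)])
  have cWpos: "real (card W) > 0" using cW by simp
  have X: "1 + real (card A) * t > 0" using t by (simp add: add_pos_nonneg)
  have "ln (real (card W)) \<le> ln (t powr (-b) * (1 + real (card A) * t) ^ card D)"
    using bound cWpos by simp
  also have "\<dots> = -b * ln t + n * ln (1 + real (card A) * t)"
    using t X unfolding n_def by (simp add: ln_mult ln_realpow)
  also have "\<dots> \<le> \<beta> * n * ln (1 / t) + n * (real (card A) * t)"
  proof -
    have lt: "ln (1 / t) \<ge> 0" using t by simp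
    have "-b * ln t = b * ln (1 / t)" using t by (simp add: ln_div)
    also have "\<dots> \<le> (\<beta> * n) * ln (1 / t)" using b(2) lt unfolding n_def by (simp add: mult_right_mono)
    finally have 1: "-b * ln t \<le> \<beta> * n * ln (1 / t)" .
    have "ln (1 + real (card A) * t) \<le> real (card A) * t" using t by (intro ln_add_one_self_le_self) simp
    then have 2: "n * ln (1 + real (card A) * t) \<le> n * (real (card A) * t)" using n0 by simp
    show ?thesis using 1 2 by linarith
  qed
  also have "\<dots> = n * (\<beta> * ln (1 / t) + real (card A) * t)" by (simp add: algebra_simps)
  also have "\<dots> \<le> n * \<theta>" using \<beta>t tA n0 by (intro mult_left_mono) auto
  finally have "ln (real (card W)) \<le> n * \<theta>" .
  then show "ln (real (card {f \<in> D \<rightarrow>\<^sub>E A. real (card {v\<in>D. f v \<noteq> a0}) \<le> b})) / real (card D) \<le> \<theta>"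
    unfolding W_def[symmetric] n_def[symmetric] using n0 by (simp add: divide_simps mult.commute)
qed



lemma entropy_le:
  fixes act :: "'m::monoid_mult \<Rightarrow> 'x::topological_space \<Rightarrow> 'x"
    and le :: "'i \<Rightarrow> 'i \<Rightarrow> bool"
    and D :: "'i \<Rightarrow> 'd set"
    and \<sigma> :: "'i \<Rightarrow> 'm \<Rightarrow> 'd \<Rightarrow> 'd"
    and \<rho> \<rho>' :: "'x \<Rightarrow> 'x \<Rightarrow> real"
  assumes cpt: "compact (UNIV :: 'x set)" and cma: "continuous_monoid_action act"
    and ssa: "strong_sofic_approx le D \<sigma>"
    and cpm: "continuous_pseudometric \<rho>" and dg: "dynamically_generating act \<rho>"
    and cpm': "continuous_pseudometric \<rho>'" and dg': "dynamically_generating act \<rho>'"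
  shows "sofic_entropy le D \<sigma> act \<rho>' \<le> sofic_entropy le D \<sigma> act \<rho>"
proof -
  have pm: "pseudometric \<rho>" and pm': "pseudometric \<rho>'" using cpm cpm' unfolding continuous_pseudometric_def by auto
  have nb: "net_filter le \<noteq> bot" using net_ne_bot[OF ssa_facts(1)[OF ssa]] .
  define L where "L r e F \<delta> = Limsup (net_filter le) (\<lambda>i. ereal (1 / real (card (D i))) *
           elog (sep_number e (Map_set act r F \<delta> (D i) (\<sigma> i)) (rho_inf (D i) r)))"
    for r :: "'x \<Rightarrow> 'x \<Rightarrow> real" and e F \<delta>
  define h where "h r e = (INF F\<in>{F. finite F}. INF \<delta>\<in>{0<..}. L r e F \<delta>)" for r :: "'x \<Rightarrow> 'x \<Rightarrow> real" and e
  have SE: "sofic_entropy le D \<sigma> act r = (SUP e\<in>{0<..}. h r e)" for r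
    unfolding sofic_entropy_def h_def L_def by simp
  have main: "h \<rho>' \<epsilon> \<le> (SUP e\<in>{0<..}. h \<rho> e)" if \<epsilon>: "\<epsilon> > 0" for \<epsilon>
  proof (rule ereal_le_epsilon2)
    fix \<theta> :: real assume \<theta>: "\<theta> > 0"
    obtain F0 \<eta> where F0: "finite F0" and \<eta>: "\<eta> > 0"
      and ctrl: "\<forall>x y. (\<forall>s\<in>F0. \<rho> (act s x) (act s y) < \<eta>) \<longrightarrow> \<rho>' x y < \<epsilon>"
      using control[OF cpt cma cpm dg cpm' \<epsilon>] by blast
    obtain C where C: "finite C" "\<forall>x. \<exists>c\<in>C. \<rho>' c x < \<epsilon> / 2"
      using pm_cells[OF cpt cpm', of "\<epsilon> / 2"] \<epsilon> by auto
    define A where "A = insert None (Some ` C)"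
    have finA: "finite A" unfolding A_def using C by simp
    define t where "t = min 1 (\<theta> / (2 * (real (card A) + 1)))"
    have t0: "t > 0" unfolding t_def using \<theta> by simp
    have t1: "t \<le> 1" unfolding t_def by simp
    have tA: "real (card A) * t \<le> \<theta> / 2"
    proof -
      have "t \<le> \<theta> / (2 * (real (card A) + 1))" unfolding t_def by simp
      then have "real (card A) * t \<le> real (card A) * (\<theta> / (2 * (real (card A) + 1)))"
        by (rule mult_left_mono) simp
      also have "\<dots> = (\<theta> / 2) * (real (card A) / (real (card A) + 1))" by simp
      also have "\<dots> \<le> (\<theta> / 2) * 1" using \<theta> by (intro mult_left_mono) auto
      finally show ?thesis by simp
    qed
    define \<beta> where "\<beta> = \<theta> / (2 * (ln (1 / t) + 1))"
    have lt: "ln (1 / t) \<ge> 0" using t0 t1 by simp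
    have \<beta>0: "\<beta> > 0" unfolding \<beta>_def using \<theta> lt by (simp add: add_nonneg_pos)
    have \<beta>t: "\<beta> * ln (1 / t) \<le> \<theta> / 2"
    proof -
      have "\<beta> * ln (1 / t) = (\<theta> / 2) * (ln (1 / t) / (ln (1 / t) + 1))" unfolding \<beta>_def by simp
      also have "\<dots> \<le> (\<theta> / 2) * 1" using \<theta> lt by (intro mult_left_mono) auto
      finally show ?thesis by simp
    qed
    obtain y where y: "y > 0" "(real (card F0) * (3 / \<eta>)\<^sup>2) * y\<^sup>2 \<le> \<beta>"
      using exists_small[of "real (card F0) * (3 / \<eta>)\<^sup>2" \<beta>] \<beta>0 by auto
    define \<delta>'' where "\<delta>'' = y"
    have \<delta>''0: "\<delta>'' > 0" unfolding \<delta>''_def using y by simp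
    have \<delta>''\<beta>: "real (card F0) * (3 * \<delta>'' / \<eta>)\<^sup>2 \<le> \<beta>"
    proof -
      have "real (card F0) * (3 * \<delta>'' / \<eta>)\<^sup>2 = (real (card F0) * (3 / \<eta>)\<^sup>2) * y\<^sup>2"
        unfolding \<delta>''_def by (simp add: power_mult_distrib power_divide)
      then show ?thesis using y(2) by linarith
    qed
    have key: "h \<rho>' \<epsilon> \<le> h \<rho> (\<eta> / 3) + ereal \<theta>"
    proof -
      have "h \<rho>' \<epsilon> - ereal \<theta> \<le> h \<rho> (\<eta> / 3)"
        unfolding h_def[of \<rho>]
      proof (intro INF_greatest)
        fix F :: "'m set" and \<delta> :: real assume F: "F \<in> {F. finite F}" and \<delta>: "\<delta> \<in> {0::real<..}"
        have finF: "finite (F \<union> F0)" using F F0 by simp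
        have md: "min \<delta> \<delta>'' > 0" using \<delta> \<delta>''0 by simp
        obtain F' \<delta>' where F': "finite F'" "\<delta>' > 0"
          and evI: "eventually (\<lambda>i. Map_set act \<rho>' F' \<delta>' (D i) (\<sigma> i) \<subseteq> Map_set act \<rho> (F \<union> F0) (min \<delta> \<delta>'') (D i) (\<sigma> i)) (net_filter le)"
          using map_incl[OF cpt cma ssa cpm cpm' dg' finF md] by blast
        have "h \<rho>' \<epsilon> \<le> L \<rho>' \<epsilon> F' \<delta>'"
          unfolding h_def by (rule INF_lower2[of F'], use F' in simp, rule INF_lower, use F' in simp)
        also have "L \<rho>' \<epsilon> F' \<delta>' \<le> Limsup (net_filter le) (\<lambda>i. ereal \<theta> + ereal (1 / real (card (D i))) *
           elog (sep_number (\<eta> / 3) (Map_set act \<rho> F \<delta> (D i) (\<sigma> i)) (rho_inf (D i) \<rho>)))"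
          unfolding L_def
        proof (rule Limsup_mono, rule eventually_mono[OF evI])
          fix i
          assume incl: "Map_set act \<rho>' F' \<delta>' (D i) (\<sigma> i) \<subseteq> Map_set act \<rho> (F \<union> F0) (min \<delta> \<delta>'') (D i) (\<sigma> i)"
          define Z where "Z = Map_set act \<rho>' F' \<delta>' (D i) (\<sigma> i)"
          have fin: "finite (D i)" and ne: "D i \<noteq> {}" and maps: "\<forall>s. \<forall>v\<in>D i. \<sigma> i s v \<in> D i"
            using ssa_facts[OF ssa] by auto
          have Z1: "Z \<subseteq> Map_set act \<rho> F0 \<delta>'' (D i) (\<sigma> i)"
            using incl Map_set_anti[of F0 "F \<union> F0" "min \<delta> \<delta>''" \<delta>'' act \<rho> "D i" "\<sigma> i"] unfolding Z_def by auto
          have Z2: "Z \<subseteq> Map_set act \<rho> F \<delta> (D i) (\<sigma> i)"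
            using incl Map_set_anti[of F "F \<union> F0" "min \<delta> \<delta>''" \<delta> act \<rho> "D i" "\<sigma> i"] unfolding Z_def by auto
          define b where "b = real (card F0) * (3 * \<delta>'' / \<eta>)\<^sup>2 * real (card (D i))"
          define W where "W = {f \<in> D i \<rightarrow>\<^sub>E A. real (card {v\<in>D i. f v \<noteq> None}) \<le> b}"
          define N where "N = sep_number (\<eta> / 3) (Map_set act \<rho> F \<delta> (D i) (\<sigma> i)) (rho_inf (D i) \<rho>)"
          have sb: "sep_number \<epsilon> Z (rho_inf (D i) \<rho>') \<le> ereal (real (card W)) * sep_number (\<eta> / 3) Z (rho_inf (D i) \<rho>)"
            unfolding W_def A_def b_def
            by (rule sep_bound[OF pm pm' fin ne maps F0 \<eta> ctrl C(1) C(2) \<delta>''0 Z1])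
          have "sep_number (\<eta> / 3) Z (rho_inf (D i) \<rho>) \<le> N"
            unfolding N_def by (rule sep_number_mono[OF Z2])
          then have "ereal (real (card W)) * sep_number (\<eta> / 3) Z (rho_inf (D i) \<rho>) \<le> ereal (real (card W)) * N"
            by (rule ereal_mult_left_mono) simp
          with sb have sb2: "sep_number \<epsilon> Z (rho_inf (D i) \<rho>') \<le> ereal (real (card W)) * N" by (rule order_trans)
          have b0: "0 \<le> b" unfolding b_def by simp
          have b\<beta>: "b \<le> \<beta> * real (card (D i))" unfolding b_def using \<delta>''\<beta> by (simp add: mult_right_mono)
          have NA: "None \<in> A" unfolding A_def by simp
          have lnW: "ln (real (card W)) / real (card (D i)) \<le> \<theta>" and cW: "card W \<ge> 1"
            unfolding W_def by (rule pattern_log_bound[OF fin ne finA NA t0 t1 b0 b\<beta> tA \<beta>t])+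
          have "elog (sep_number \<epsilon> Z (rho_inf (D i) \<rho>')) \<le> ereal (ln (real (card W))) + elog N"
            by (rule elog_bound[OF sep_number_nonneg sb2]) (use cW in simp, simp add: N_def sep_number_nonneg)
          then have "ereal (1 / real (card (D i))) * elog (sep_number \<epsilon> Z (rho_inf (D i) \<rho>'))
              \<le> ereal (1 / real (card (D i))) * (ereal (ln (real (card W))) + elog N)"
            by (rule ereal_mult_left_mono) simp
          also have "\<dots> = ereal (1 / real (card (D i)) * ln (real (card W))) + ereal (1 / real (card (D i))) * elog N"
            by (rule ereal_scale_add) (use fin ne in \<open>simp add: card_gt_0_iff\<close>)
          also have "\<dots> \<le> ereal \<theta> + ereal (1 / real (card (D i))) * elog N"
            using lnW by (intro add_right_mono) (simp add: divide_inverse mult.commute)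
          finally show "ereal (1 / real (card (D i))) * elog (sep_number \<epsilon> (Map_set act \<rho>' F' \<delta>' (D i) (\<sigma> i)) (rho_inf (D i) \<rho>'))
              \<le> ereal \<theta> + ereal (1 / real (card (D i))) * elog (sep_number (\<eta> / 3) (Map_set act \<rho> F \<delta> (D i) (\<sigma> i)) (rho_inf (D i) \<rho>))"
            unfolding Z_def N_def .
        qed
        also have "\<dots> = ereal \<theta> + L \<rho> (\<eta> / 3) F \<delta>"
          unfolding L_def by (rule Limsup_add_ereal_left[OF nb]) simp
        finally have "h \<rho>' \<epsilon> \<le> L \<rho> (\<eta> / 3) F \<delta> + ereal \<theta>" by (simp add: add.commute)
        then show "h \<rho>' \<epsilon> - ereal \<theta> \<le> L \<rho> (\<eta> / 3) F \<delta>" by (simp add: ereal_minus_le)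
      qed
      then show ?thesis by (simp add: ereal_minus_le)
    qed
    also have "h \<rho> (\<eta> / 3) + ereal \<theta> \<le> (SUP e\<in>{0<..}. h \<rho> e) + ereal \<theta>"
      by (intro add_right_mono SUP_upper) (use \<eta> in simp)
    finally show "h \<rho>' \<epsilon> \<le> (SUP e\<in>{0<..}. h \<rho> e) + ereal \<theta>" .
  qed
  show ?thesis unfolding SE by (rule SUP_least) (use main in simp)
qed

theorem proposition4p6:
  fixes act :: "'m::monoid_mult \<Rightarrow> 'x::topological_space \<Rightarrow> 'x"
    and le :: "'i \<Rightarrow> 'i \<Rightarrow> bool"
    and D :: "'i \<Rightarrow> 'd set"
    and \<sigma> :: "'i \<Rightarrow> 'm \<Rightarrow> 'd \<Rightarrow> 'd"
    and \<rho> \<rho>' :: "'x \<Rightarrow> 'x \<Rightarrow> real"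
  assumes "compact (UNIV :: 'x set)"
    and "continuous_monoid_action act"
    and "infinite (UNIV :: 'm set)"
    and "strongly_sofic TYPE('m)"
    and "strong_sofic_approx le D \<sigma>"
    and "continuous_pseudometric \<rho>" and "dynamically_generating act \<rho>"
    and "continuous_pseudometric \<rho>'" and "dynamically_generating act \<rho>'"
  shows "sofic_entropy le D \<sigma> act \<rho> = sofic_entropy le D \<sigma> act \<rho>'"
proof (rule antisym)
  show "sofic_entropy le D \<sigma> act \<rho> \<le> sofic_entropy le D \<sigma> act \<rho>'"
    by (rule entropy_le[OF assms(1,2,5,8,9,6,7)])
  show "sofic_entropy le D \<sigma> act \<rho>' \<le> sofic_entropy le D \<sigma> act \<rho>"
    by (rule entropy_le[OF assms(1,2,5,6,7,8,9)])
qed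

end
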